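(* Let $B_n$ be the number of bidirectional ballot sequences of length $n$. Then $B_n=\Theta(2^n/n)$ as $n\to\infty$.
   Context: A 0-1 sequence of length $n$ is a bidirectional ballot sequence if every nonempty prefix and every nonempty suffix of it contains strictly more 1's than 0's. $f=\Theta(g)$ means there are positive constants $c,C$ with $cg(n)\le f(n)\le Cg(n)$ for all sufficiently large $n$. *)

theory Defs
  imports Complex_Main
begin

definition ones :: "bool list \<Rightarrow> nat" where
  "ones xs = length (filter (\<lambda>b. b) xs)"

definition zeros :: "bool list \<Rightarrow> nat" where
  "zeros xs = length (filter (\<lambda>b. \<not> b) xs)"

definition bidir_ballot :: "bool list \<Rightarrow> bool" where
  "bidir_ballot xs \<longleftrightarrow>
     (\<forall>k. 1 \<le> k \<and> k \<le> length xs \<longrightarrow> zeros (take k xs) < ones (take k xs)) \<and>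
     (\<forall>k. k < length xs \<longrightarrow> zeros (drop k xs) < ones (drop k xs))"

definition B :: "nat \<Rightarrow> nat" where
  "B n = card {xs :: bool list. length xs = n \<and> bidir_ballot xs}"

end

theory Submission
  imports Defs
begin


definition hgt :: "bool list \<Rightarrow> int" where
  "hgt xs = int (ones xs) - int (zeros xs)"

lemma hgt_Nil[simp]: "hgt [] = 0" by (simp add: hgt_def ones_def zeros_def)
lemma hgt_Cons[simp]: "hgt (b # xs) = (if b then 1 else -1) + hgt xs"
  by (simp add: hgt_def ones_def zeros_def)
lemma hgt_append[simp]: "hgt (xs @ ys) = hgt xs + hgt ys"
  by (induction xs) auto
lemma hgt_rev[simp]: "hgt (rev xs) = hgt xs"
  by (induction xs) auto
lemma hgt_map_Not[simp]: "hgt (map Not xs) = - hgt xs"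
  by (induction xs) auto
lemma zo_iff: "zeros xs < ones xs \<longleftrightarrow> hgt xs > 0"
  by (simp add: hgt_def)
lemma hgt_drop: "hgt (drop k xs) = hgt xs - hgt (take k xs)"
  using hgt_append[of "take k xs" "drop k xs"] by simp

lemma bidir_iff: "bidir_ballot xs \<longleftrightarrow>
     (\<forall>k. 1 \<le> k \<and> k \<le> length xs \<longrightarrow> hgt (take k xs) > 0) \<and>
     (\<forall>k. k < length xs \<longrightarrow> hgt (drop k xs) > 0)"
  by (simp add: bidir_ballot_def zo_iff)

lemma hgt_take_Suc: "\<bar>hgt (take (Suc k) xs) - hgt (take k xs)\<bar> \<le> 1"
proof (cases "k < length xs")
  case True
  then have "take (Suc k) xs = take k xs @ [xs ! k]" by (simp add: take_Suc_conv_app_nth)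
  then show ?thesis by simp
next
  case False then show ?thesis by simp
qed

lemma ivt_up: fixes f :: "nat \<Rightarrow> int"
  assumes step: "\<And>k. \<bar>f (Suc k) - f k\<bar> \<le> 1" and "i \<le> j" "f i \<le> v" "v \<le> f j"
  shows "\<exists>k. i \<le> k \<and> k \<le> j \<and> f k = v"
  using assms(2-4)
proof (induction j)
  case 0 then show ?case by auto
next
  case (Suc j)
  show ?case
  proof (cases "i \<le> j \<and> v \<le> f j")
    case True
    then obtain k where "i \<le> k \<and> k \<le> j \<and> f k = v" using Suc by auto
    then show ?thesis by auto
  next
    case False
    have "f (Suc j) = v"
    proof (cases "i \<le> j")
      case True
      with False have "f j < v" by auto
      with step[of j] Suc.prems show ?thesis by auto
    next
      case False
      with Suc.prems have "i = Suc j" by auto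
      with Suc.prems show ?thesis by auto
    qed
    then show ?thesis using Suc.prems by auto
  qed
qed

lemma ivt_down: fixes f :: "nat \<Rightarrow> int"
  assumes step: "\<And>k. \<bar>f (Suc k) - f k\<bar> \<le> 1" and "i \<le> j" "f j \<le> v" "v \<le> f i"
  shows "\<exists>k. i \<le> k \<and> k \<le> j \<and> f k = v"
proof -
  have "\<exists>k. i \<le> k \<and> k \<le> j \<and> - f k = - v"
    by (rule ivt_up[of "\<lambda>k. - f k"]) (use assms in \<open>auto simp: abs_minus_commute\<close>)
  then show ?thesis by auto
qed



definition Cum :: "nat \<Rightarrow> int \<Rightarrow> int" where
  "Cum L t = (\<Sum>k\<le>L. if int k \<le> t then int (L choose k) else 0)"

lemma Cum_0[simp]: "Cum 0 t = (if 0 \<le> t then 1 else 0)"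
  by (simp add: Cum_def)

lemma Cum_Suc: "Cum (Suc L) t = Cum L t + Cum L (t - 1)"
proof -
  have "Cum (Suc L) t = (if 0 \<le> t then 1 else 0) +
      (\<Sum>j\<le>L. if int (Suc j) \<le> t then int (Suc L choose Suc j) else 0)"
    unfolding Cum_def by (subst sum.atMost_Suc_shift) simp
  also have "(\<Sum>j\<le>L. if int (Suc j) \<le> t then int (Suc L choose Suc j) else 0) =
      (\<Sum>j\<le>L. if int j \<le> t - 1 then int (L choose j) else 0) +
      (\<Sum>j\<le>L. if int (Suc j) \<le> t then int (L choose Suc j) else 0)"
    by (subst sum.distrib[symmetric]) (rule sum.cong, auto)
  also have "(\<Sum>j\<le>L. if int (Suc j) \<le> t then int (L choose Suc j) else 0) =
      Cum L t - (if 0 \<le> t then 1 else 0)"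
  proof -
    have "Cum L t = (\<Sum>k\<le>Suc L. if int k \<le> t then int (L choose k) else 0)"
      unfolding Cum_def by simp
    also have "\<dots> = (if 0 \<le> t then 1 else 0) + (\<Sum>j\<le>L. if int (Suc j) \<le> t then int (L choose Suc j) else 0)"
      by (subst sum.atMost_Suc_shift) simp
    finally show ?thesis by simp
  qed
  finally show ?thesis unfolding Cum_def by simp
qed

lemma Cum_diff: "0 \<le> t \<Longrightarrow> Cum L t - Cum L (t - 1) = (if t \<le> int L then int (L choose nat t) else 0)"
proof -
  assume t: "0 \<le> t"
  have "Cum L t - Cum L (t - 1) = (\<Sum>k\<le>L. if int k = t then int (L choose k) else 0)"
    unfolding Cum_def by (subst sum_subtractf[symmetric]) (rule sum.cong, auto)
  also have "\<dots> = (\<Sum>k\<le>L. if k = nat t then int (L choose k) else 0)"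
    by (rule sum.cong) (use t in auto)
  also have "\<dots> = (if nat t \<in> {..L} then int (L choose nat t) else 0)"
    by (rule sum.delta) simp
  also have "\<dots> = (if t \<le> int L then int (L choose nat t) else 0)"
    using t by auto
  finally show ?thesis .
qed

definition cf :: "nat \<Rightarrow> int \<Rightarrow> int \<Rightarrow> int" where
  "cf L h s = Cum L ((int L + h - s) div 2) - Cum L ((int L - h - s - 2) div 2)"

lemma cf_Suc: "cf (Suc L) h s = cf L (h + 1) s + cf L (h - 1) s"
proof -
  define X where "X = (int (Suc L) + h - s) div 2"
  define Y where "Y = (int (Suc L) - h - s - 2) div 2"
  have 1: "cf (Suc L) h s = Cum L X + Cum L (X - 1) - (Cum L Y + Cum L (Y - 1))"
    unfolding cf_def Cum_Suc X_def Y_def by simp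
  have e1: "X = (int L + (h + 1) - s) div 2" unfolding X_def by simp
  have e2: "X - 1 = (int L + (h - 1) - s) div 2" unfolding X_def by presburger
  have e3: "Y = (int L - (h - 1) - s - 2) div 2" unfolding Y_def by simp
  have e4: "Y - 1 = (int L - (h + 1) - s - 2) div 2" unfolding Y_def by presburger
  have c1: "cf L (h + 1) s = Cum L X - Cum L (Y - 1)"
    unfolding cf_def e1[symmetric] e4[symmetric] by (rule refl)
  have c2: "cf L (h - 1) s = Cum L (X - 1) - Cum L Y"
    unfolding cf_def e2[symmetric] e3[symmetric] by (rule refl)
  show ?thesis using 1 c1 c2 by linarith
qed

lemma cf_neg1: "cf L (-1) s = 0"
  unfolding cf_def by (simp add: algebra_simps)

definition NNset :: "nat \<Rightarrow> int \<Rightarrow> int \<Rightarrow> bool list set" where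
  "NNset L h s = {xs. length xs = L \<and> (\<forall>k. h + hgt (take k xs) \<ge> 0) \<and> h + hgt xs \<ge> s}"

lemma NNset_finite: "finite (NNset L h s)"
proof -
  have "finite {xs::bool list. set xs \<subseteq> UNIV \<and> length xs = L}"
    by (rule finite_lists_length_eq) simp
  then show ?thesis by (rule finite_subset[rotated]) (auto simp: NNset_def)
qed

lemma NNset_neg: assumes "h < 0" shows "NNset L h s = {}"
proof -
  { fix xs assume "xs \<in> NNset L h s"
    then have "\<forall>k. 0 \<le> h + hgt (take k xs)" by (simp add: NNset_def)
    then have "h + hgt (take 0 xs) \<ge> 0" by blast
    with assms have False by simp }
  then show ?thesis by blast
qed

lemma NNset_0: "0 \<le> h \<Longrightarrow> NNset 0 h s = (if s \<le> h then {[]} else {})"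
  unfolding NNset_def by auto

lemma NNset_Suc: assumes "0 \<le> h"
  shows "NNset (Suc L) h s = Cons True ` NNset L (h + 1) s \<union> Cons False ` NNset L (h - 1) s"
proof (rule set_eqI)
  fix xs
  show "xs \<in> NNset (Suc L) h s \<longleftrightarrow> xs \<in> Cons True ` NNset L (h + 1) s \<union> Cons False ` NNset L (h - 1) s"
  proof (cases xs)
    case Nil then show ?thesis by (auto simp: NNset_def)
  next
    case (Cons b ys)
    have A: "(\<forall>k. h + hgt (take k (b # ys)) \<ge> 0) \<longleftrightarrow> (\<forall>k. h + (if b then 1 else -1) + hgt (take k ys) \<ge> 0)"
    proof
      assume H: "\<forall>k. h + hgt (take k (b # ys)) \<ge> 0"
      show "\<forall>k. h + (if b then 1 else -1) + hgt (take k ys) \<ge> 0"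
      proof
        fix k show "h + (if b then 1 else -1) + hgt (take k ys) \<ge> 0" using H[rule_format, of "Suc k"] by simp
      qed
    next
      assume H: "\<forall>k. h + (if b then 1 else -1) + hgt (take k ys) \<ge> 0"
      show "\<forall>k. h + hgt (take k (b # ys)) \<ge> 0"
      proof
        fix k show "h + hgt (take k (b # ys)) \<ge> 0"
          using H[rule_format, of "k - 1"] assms by (cases k) auto
      qed
    qed
    show ?thesis unfolding Cons NNset_def using A by (cases b) (auto simp: algebra_simps)
  qed
qed

lemma card_NNset: "-1 \<le> h \<Longrightarrow> 0 \<le> s \<Longrightarrow> int (card (NNset L h s)) = cf L h s"
proof (induction L arbitrary: h)
  case 0
  show ?case
  proof (cases "h = -1")
    case True then show ?thesis using cf_neg1[of 0 s] NNset_neg[of h] by simp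
  next
    case False
    then have h: "0 \<le> h" using 0 by simp
    have "(- h - s - 2) div 2 < 0" using h 0 by simp
    then show ?thesis using h 0 unfolding NNset_0[OF h] cf_def by simp
  qed
next
  case (Suc L)
  show ?case
  proof (cases "h = -1")
    case True then show ?thesis using cf_neg1[of "Suc L" s] NNset_neg[of h] by simp
  next
    case False
    then have h: "0 \<le> h" using Suc by simp
    have "card (NNset (Suc L) h s) = card (NNset L (h + 1) s) + card (NNset L (h - 1) s)"
      unfolding NNset_Suc[OF h]
      by (subst card_Un_disjoint) (auto simp: NNset_finite card_image)
    then show ?thesis using Suc.IH[of "h+1"] Suc.IH[of "h - 1"] Suc.prems h cf_Suc by simp
  qed
qed



definition pos :: "nat \<Rightarrow> bool list set" where
  "pos a = {x. length x = a \<and> (\<forall>k. 1 \<le> k \<longrightarrow> k \<le> a \<longrightarrow> hgt (take k x) > 0)}"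

definition PosGe :: "nat \<Rightarrow> int \<Rightarrow> bool list set" where
  "PosGe a s = {x \<in> pos a. hgt x \<ge> s}"

lemma finite_len: "finite {xs::bool list. length xs = n}"
proof -
  have "finite {xs::bool list. set xs \<subseteq> UNIV \<and> length xs = n}"
    by (rule finite_lists_length_eq) simp
  then show ?thesis by simp
qed

lemma pos_finite: "finite (pos a)"
  by (rule finite_subset[OF _ finite_len[of a]]) (auto simp: pos_def)

lemma PosGe_eq: "PosGe (Suc m) s = Cons True ` NNset m 0 (s - 1)"
proof (rule set_eqI)
  fix x
  show "x \<in> PosGe (Suc m) s \<longleftrightarrow> x \<in> Cons True ` NNset m 0 (s - 1)"
  proof
    assume x: "x \<in> PosGe (Suc m) s"
    then obtain b ys where xb: "x = b # ys" and ly: "length ys = m"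
      by (cases x) (auto simp: PosGe_def pos_def)
    have P: "\<And>k. 1 \<le> k \<Longrightarrow> k \<le> Suc m \<Longrightarrow> hgt (take k x) > 0" using x by (auto simp: PosGe_def pos_def)
    have b: "b" using P[of 1] xb by (cases b) auto
    have "\<forall>j. 0 + hgt (take j ys) \<ge> 0"
    proof
      fix j
      show "0 + hgt (take j ys) \<ge> 0"
      proof (cases "j \<le> m")
        case True then show ?thesis using P[of "Suc j"] xb b by simp
      next
        case False then show ?thesis using P[of "Suc m"] xb b ly by simp
      qed
    qed
    moreover have "0 + hgt ys \<ge> s - 1" using x xb b by (simp add: PosGe_def)
    ultimately show "x \<in> Cons True ` NNset m 0 (s - 1)" using xb b ly by (auto simp: NNset_def)
  next
    assume "x \<in> Cons True ` NNset m 0 (s - 1)"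
    then obtain ys where xb: "x = True # ys" and ys: "ys \<in> NNset m 0 (s - 1)" by auto
    have "hgt (take k x) > 0" if "1 \<le> k" for k
    proof -
      have "0 \<le> hgt (take (k - 1) ys)" using ys by (auto simp: NNset_def)
      then show ?thesis using that xb by (cases k) auto
    qed
    then show "x \<in> PosGe (Suc m) s" using ys xb by (auto simp: PosGe_def pos_def NNset_def)
  qed
qed

lemma card_PosGe: assumes "1 \<le> s" "s \<le> int m + 1"
  shows "card (PosGe (Suc m) s) = m choose nat ((int m + 1 - s) div 2)"
proof -
  have "int (card (PosGe (Suc m) s)) = int (card (NNset m 0 (s - 1)))"
    unfolding PosGe_eq by (subst card_image) auto
  also have "\<dots> = cf m 0 (s - 1)" using assms by (intro card_NNset) auto
  also have "\<dots> = Cum m ((int m + 1 - s) div 2) - Cum m ((int m + 1 - s) div 2 - 1)"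
  proof -
    have "(int m - 0 - (s - 1) - 2) div 2 = (int m + 1 - s) div 2 - 1" by presburger
    moreover have "(int m + 0 - (s - 1)) div 2 = (int m + 1 - s) div 2" by simp
    ultimately show ?thesis unfolding cf_def by simp
  qed
  also have "\<dots> = int (m choose nat ((int m + 1 - s) div 2))"
    using assms by (subst Cum_diff) auto
  finally show ?thesis by simp
qed

lemma pos_hgt: assumes "x \<in> pos (Suc m)" shows "hgt x \<ge> 1"
proof -
  have "hgt (take (Suc m) x) > 0" using assms by (auto simp: pos_def)
  then show ?thesis using assms by (simp add: pos_def)
qed

lemma pos_PosGe: "pos (Suc m) = PosGe (Suc m) 1"
  unfolding PosGe_def using pos_hgt by auto

lemma card_pos: "card (pos (Suc m)) = m choose (m div 2)"
proof -
  have "nat ((int m + 1 - 1) div 2) = m div 2" by simp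
  then show ?thesis unfolding pos_PosGe using card_PosGe[of 1 m] by simp
qed

lemma B_upper_split: assumes "a + b = n"
  shows "B n \<le> card (pos a) * card (pos b)"
proof -
  let ?f = "\<lambda>xs::bool list. (take a xs, rev (drop a xs))"
  have "card {xs :: bool list. length xs = n \<and> bidir_ballot xs} \<le> card (pos a \<times> pos b)"
  proof (rule card_inj_on_le)
    show "inj_on ?f {xs. length xs = n \<and> bidir_ballot xs}"
      by (rule inj_onI) (metis append_take_drop_id prod.inject rev_rev_ident)
    show "finite (pos a \<times> pos b)" using pos_finite by auto
    show "?f ` {xs. length xs = n \<and> bidir_ballot xs} \<subseteq> pos a \<times> pos b"
    proof (rule image_subsetI)
      fix xs :: "bool list" assume "xs \<in> {xs. length xs = n \<and> bidir_ballot xs}"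
      then have l: "length xs = n" and bb: "bidir_ballot xs" by auto
      have P: "\<And>k. 1 \<le> k \<Longrightarrow> k \<le> n \<Longrightarrow> hgt (take k xs) > 0"
        and S: "\<And>k. k < n \<Longrightarrow> hgt (drop k xs) > 0" using bb l by (auto simp: bidir_iff)
      have "take a xs \<in> pos a" using P l assms by (auto simp: pos_def min_def)
      have "hgt (take k (rev (drop a xs))) > 0" if "1 \<le> k" "k \<le> b" for k
      proof -
        have "take k (rev (drop a xs)) = rev (drop (n - k) xs)"
          using l assms that by (simp add: take_rev)
        then show ?thesis using S[of "n - k"] that assms by simp
      qed
      then have "rev (drop a xs) \<in> pos b" using l assms by (auto simp: pos_def)
      then show "?f xs \<in> pos a \<times> pos b" using \<open>take a xs \<in> pos a\<close> by simp
    qed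
  qed
  then show ?thesis unfolding B_def by (simp add: card_cartesian_product)
qed

lemma B_mono: "B n \<le> B (Suc n)"
proof -
  let ?f = "\<lambda>xs::bool list. xs @ [True]"
  have "card {xs :: bool list. length xs = n \<and> bidir_ballot xs} \<le> card {xs :: bool list. length xs = Suc n \<and> bidir_ballot xs}"
  proof (rule card_inj_on_le)
    show "inj_on ?f {xs. length xs = n \<and> bidir_ballot xs}" by (rule inj_onI) simp
    show "finite {xs :: bool list. length xs = Suc n \<and> bidir_ballot xs}"
      by (rule finite_subset[OF _ finite_len[of "Suc n"]]) auto
    show "?f ` {xs. length xs = n \<and> bidir_ballot xs} \<subseteq> {xs :: bool list. length xs = Suc n \<and> bidir_ballot xs}"
    proof (rule image_subsetI)
      fix xs :: "bool list" assume "xs \<in> {xs. length xs = n \<and> bidir_ballot xs}"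
      then have l: "length xs = n" and bb: "bidir_ballot xs" by auto
      have P: "\<And>k. 1 \<le> k \<Longrightarrow> k \<le> n \<Longrightarrow> hgt (take k xs) > 0"
        and S: "\<And>k. k < n \<Longrightarrow> hgt (drop k xs) > 0" using bb l by (auto simp: bidir_iff)
      have H: "hgt xs \<ge> 0" using P[of n] l by (cases n) auto
      have "hgt (take k (xs @ [True])) > 0" if "1 \<le> k" "k \<le> Suc n" for k
      proof (cases "k \<le> n")
        case True then show ?thesis using P[of k] that l by simp
      next
        case False then have "k = Suc n" using that by simp
        then show ?thesis using H l by simp
      qed
      moreover have "hgt (drop k (xs @ [True])) > 0" if "k < Suc n" for k
      proof (cases "k < n")
        case True then show ?thesis using S[of k] l by simp
      next
        case False then show ?thesis using that l by simp
      qed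
      ultimately show "xs @ [True] \<in> {xs :: bool list. length xs = Suc n \<and> bidir_ballot xs}"
        using l by (simp add: bidir_iff)
    qed
  qed
  then show ?thesis unfolding B_def .
qed

lemma B_mono': "m \<le> n \<Longrightarrow> B m \<le> B n"
  by (induction n) (auto simp: le_Suc_eq intro: order.trans[OF _ B_mono])



definition Good :: "nat \<Rightarrow> int \<Rightarrow> bool list set" where
  "Good a T = {x \<in> pos a. hgt x \<ge> T \<and> (\<forall>k. hgt (take k x) < hgt x + T)}"

lemma Good_finite: "finite (Good a T)"
  by (rule finite_subset[OF _ pos_finite[of a]]) (auto simp: Good_def)

lemma good_concat:
  assumes x: "x \<in> Good a T" and y: "y \<in> Good a T"
  shows "bidir_ballot (x @ rev y)"
proof -
  have lx: "length x = a" and ly: "length y = a" using x y by (auto simp: Good_def pos_def)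
  have Px: "\<And>k. 1 \<le> k \<Longrightarrow> k \<le> a \<Longrightarrow> hgt (take k x) > 0" using x by (auto simp: Good_def pos_def)
  have Py: "\<And>k. 1 \<le> k \<Longrightarrow> k \<le> a \<Longrightarrow> hgt (take k y) > 0" using y by (auto simp: Good_def pos_def)
  have Hx: "hgt x \<ge> T" and Mx: "\<And>k. hgt (take k x) < hgt x + T" using x by (auto simp: Good_def)
  have Hy: "hgt y \<ge> T" and My: "\<And>k. hgt (take k y) < hgt y + T" using y by (auto simp: Good_def)
  have "hgt (take k (x @ rev y)) > 0" if "1 \<le> k" "k \<le> a + a" for k
  proof (cases "k \<le> a")
    case True then show ?thesis using Px[of k] that lx by simp
  next
    case False
    then have "take k (x @ rev y) = x @ rev (drop (a + a - k) y)"
      using lx ly by (simp add: take_rev)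
    then have "hgt (take k (x @ rev y)) = hgt x + hgt y - hgt (take (a + a - k) y)"
      by (simp add: hgt_drop)
    then show ?thesis using My[of "a + a - k"] Hx by simp
  qed
  moreover have "hgt (drop k (x @ rev y)) > 0" if "k < a + a" for k
  proof (cases "k < a")
    case True
    then have "hgt (drop k (x @ rev y)) = hgt x - hgt (take k x) + hgt y"
      using lx by (simp add: hgt_drop)
    then show ?thesis using Mx[of k] Hy by simp
  next
    case False
    then have "drop k (x @ rev y) = rev (take (a + a - k) y)"
      using lx ly by (simp add: drop_rev)
    then show ?thesis using Py[of "a + a - k"] that False by simp
  qed
  ultimately show ?thesis using lx ly by (simp add: bidir_iff)
qed

lemma Good_sq: "card (Good a T) * card (Good a T) \<le> B (a + a)"
proof -
  let ?f = "\<lambda>(x::bool list, y::bool list). x @ rev y"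
  have "card (Good a T \<times> Good a T) \<le> card {xs :: bool list. length xs = a + a \<and> bidir_ballot xs}"
  proof (rule card_inj_on_le)
    show "inj_on ?f (Good a T \<times> Good a T)"
    proof (rule inj_onI, clarify)
      fix x y x' y' assume "x \<in> Good a T" "y \<in> Good a T" "x' \<in> Good a T" "y' \<in> Good a T"
        and e: "x @ rev y = x' @ rev y'"
      then have "length x = length x'" by (auto simp: Good_def pos_def)
      with e show "x = x' \<and> y = y'" by auto
    qed
    show "finite {xs :: bool list. length xs = a + a \<and> bidir_ballot xs}"
      by (rule finite_subset[OF _ finite_len[of "a + a"]]) auto
    show "?f ` (Good a T \<times> Good a T) \<subseteq> {xs. length xs = a + a \<and> bidir_ballot xs}"
      using good_concat by (auto simp: Good_def pos_def)
  qed
  then show ?thesis unfolding B_def by (simp add: card_cartesian_product)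
qed

definition Bad :: "nat \<Rightarrow> int \<Rightarrow> bool list set" where
  "Bad a T = {x \<in> pos a. \<exists>k. hgt (take k x) \<ge> hgt x + T}"

definition tau :: "int \<Rightarrow> bool list \<Rightarrow> nat" where
  "tau T x = (GREATEST j. j \<le> length x \<and> hgt (take j x) = hgt x + T)"

lemma tau_props:
  assumes x: "x \<in> Bad (Suc m) T" and T: "1 \<le> T"
  shows "tau T x \<le> length x" "hgt (take (tau T x) x) = hgt x + T"
    "\<And>j. tau T x < j \<Longrightarrow> j \<le> length x \<Longrightarrow> hgt (take j x) < hgt x + T"
proof -
  let ?P = "\<lambda>j. j \<le> length x \<and> hgt (take j x) = hgt x + T"
  have xp: "x \<in> pos (Suc m)" using x by (simp add: Bad_def)
  have H: "hgt x \<ge> 1" using pos_hgt[OF xp] .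
  obtain k where k: "hgt (take k x) \<ge> hgt x + T" using x by (auto simp: Bad_def)
  have kl: "k \<le> length x"
  proof (rule ccontr)
    assume "\<not> k \<le> length x" then show False using k T by simp
  qed
  have step: "\<And>k. \<bar>hgt (take (Suc k) x) - hgt (take k x)\<bar> \<le> 1" by (rule hgt_take_Suc)
  obtain j where j: "0 \<le> j" "j \<le> k" "hgt (take j x) = hgt x + T"
    using ivt_up[of "\<lambda>j. hgt (take j x)", OF step, of 0 k "hgt x + T"] k H T by auto
  have Pj: "?P j" using j kl by simp
  have bnd: "\<forall>y. ?P y \<longrightarrow> y \<le> length x" by simp
  show t1: "tau T x \<le> length x" and t2: "hgt (take (tau T x) x) = hgt x + T"
    using GreatestI_nat[of ?P j "length x", OF Pj] bnd unfolding tau_def by auto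
  fix j' assume j': "tau T x < j'" "j' \<le> length x"
  show "hgt (take j' x) < hgt x + T"
  proof (rule ccontr)
    assume "\<not> hgt (take j' x) < hgt x + T"
    then have "hgt (take j' x) \<ge> hgt x + T" by simp
    moreover have "hgt (take (length x) x) \<le> hgt x + T" using T by simp
    ultimately obtain i where i: "j' \<le> i" "i \<le> length x" "hgt (take i x) = hgt x + T"
      using ivt_down[of "\<lambda>j. hgt (take j x)", OF step, of j' "length x" "hgt x + T"] j' by auto
    then have "i \<le> tau T x" unfolding tau_def by (intro Greatest_le_nat[of ?P i "length x"]) auto
    then show False using i j' by simp
  qed
qed

definition reflw :: "int \<Rightarrow> bool list \<Rightarrow> bool list" where
  "reflw T x = take (tau T x) x @ map Not (drop (tau T x) x)"

lemma refl_take_le: "tau T x \<le> length x \<Longrightarrow> j \<le> tau T x \<Longrightarrow> take j (reflw T x) = take j x"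
  unfolding reflw_def by (simp add: min_def)

lemma refl_hgt_ge:
  assumes "tau T x \<le> length x" "tau T x \<le> j" "hgt (take (tau T x) x) = l"
  shows "hgt (take j (reflw T x)) = 2 * l - hgt (take j x)"
proof -
  let ?t = "tau T x"
  have e1: "take j (reflw T x) = take ?t x @ map Not (take (j - ?t) (drop ?t x))"
    using assms unfolding reflw_def by (simp add: take_map min_def)
  have "take j x = take (?t + (j - ?t)) x" using assms by simp
  also have "\<dots> = take ?t x @ take (j - ?t) (drop ?t x)" by (rule take_add)
  finally have e2: "take j x = take ?t x @ take (j - ?t) (drop ?t x)" .
  show ?thesis unfolding e1 using e2 assms(3) by simp
qed

lemma card_Bad: assumes T: "1 \<le> T"
  shows "card (Bad (Suc m) T) \<le> card (PosGe (Suc m) (2 * T + 1))"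
proof (rule card_inj_on_le)
  show "finite (PosGe (Suc m) (2 * T + 1))"
    by (rule finite_subset[OF _ pos_finite[of "Suc m"]]) (auto simp: PosGe_def)
  have hz: "hgt (reflw T x) = hgt x + 2 * T" if x: "x \<in> Bad (Suc m) T" for x
  proof -
    have "hgt (take (length x) (reflw T x)) = 2 * (hgt x + T) - hgt (take (length x) x)"
      using tau_props[OF x T] by (intro refl_hgt_ge) auto
    moreover have "length (reflw T x) = length x" using tau_props[OF x T] by (simp add: reflw_def)
    ultimately show ?thesis by simp
  qed
  have above: "hgt (take j (reflw T x)) > hgt x + T"
    if x: "x \<in> Bad (Suc m) T" and j: "tau T x < j" "j \<le> length x" for x j
  proof -
    have "hgt (take j (reflw T x)) = 2 * (hgt x + T) - hgt (take j x)"
      using tau_props[OF x T] j by (intro refl_hgt_ge) auto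
    then show ?thesis using tau_props(3)[OF x T j] by simp
  qed
  show "reflw T ` Bad (Suc m) T \<subseteq> PosGe (Suc m) (2 * T + 1)"
  proof (rule image_subsetI)
    fix x assume x: "x \<in> Bad (Suc m) T"
    have xp: "x \<in> pos (Suc m)" using x by (simp add: Bad_def)
    have H: "hgt x \<ge> 1" using pos_hgt[OF xp] .
    have lz: "length (reflw T x) = Suc m" using tau_props[OF x T] xp by (simp add: reflw_def pos_def)
    have "hgt (take k (reflw T x)) > 0" if "1 \<le> k" "k \<le> Suc m" for k
    proof (cases "k \<le> tau T x")
      case True then show ?thesis using refl_take_le[OF tau_props(1)[OF x T] True] xp that
        by (simp add: pos_def)
    next
      case False then show ?thesis using above[OF x, of k] that xp H T by (simp add: pos_def)
    qed
    then show "reflw T x \<in> PosGe (Suc m) (2 * T + 1)" using lz hz[OF x] H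
      by (simp add: PosGe_def pos_def)
  qed
  show "inj_on (reflw T) (Bad (Suc m) T)"
  proof (rule inj_onI)
    fix x x' assume x: "x \<in> Bad (Suc m) T" and x': "x' \<in> Bad (Suc m) T" and e: "reflw T x = reflw T x'"
    have lx: "length x = Suc m" "length x' = Suc m" using x x' by (auto simp: Bad_def pos_def)
    have Hq: "hgt x = hgt x'" using hz[OF x] hz[OF x'] e by simp
    let ?t = "tau T x" and ?t' = "tau T x'"
    have tt: "?t = ?t'"
    proof (rule ccontr)
      assume "?t \<noteq> ?t'"
      then consider "?t < ?t'" | "?t' < ?t" by linarith
      then show False
      proof cases
        case 1
        have "hgt (take ?t' (reflw T x')) = hgt x' + T"
          using refl_take_le[OF tau_props(1)[OF x' T], of ?t'] tau_props(2)[OF x' T] by simp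
        moreover have "hgt (take ?t' (reflw T x)) > hgt x + T"
          using above[OF x 1] tau_props(1)[OF x' T] lx by simp
        ultimately show False using e Hq by simp
      next
        case 2
        have "hgt (take ?t (reflw T x)) = hgt x + T"
          using refl_take_le[OF tau_props(1)[OF x T], of ?t] tau_props(2)[OF x T] by simp
        moreover have "hgt (take ?t (reflw T x')) > hgt x' + T"
          using above[OF x' 2] tau_props(1)[OF x T] lx by simp
        ultimately show False using e Hq by simp
      qed
    qed
    have a1: "take ?t x = take ?t x'"
      using refl_take_le[OF tau_props(1)[OF x T], of ?t] refl_take_le[OF tau_props(1)[OF x' T], of ?t'] e tt
      by simp
    have "drop ?t (reflw T x) = map Not (drop ?t x)"
      using tau_props(1)[OF x T] by (simp add: reflw_def)
    moreover have "drop ?t (reflw T x') = map Not (drop ?t x')"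
      using tau_props(1)[OF x' T] tt by (simp add: reflw_def)
    ultimately have "map Not (drop ?t x) = map Not (drop ?t x')" using e by simp
    then have "map Not (map Not (drop ?t x)) = map Not (map Not (drop ?t x'))" by simp
    then have a2: "drop ?t x = drop ?t x'" by (simp add: comp_def)
    show "x = x'" using a1 a2 by (metis append_take_drop_id)
  qed
qed

lemma card_Good: assumes T: "1 \<le> T"
  shows "int (card (Good (Suc m) T)) \<ge> int (card (PosGe (Suc m) T)) - int (card (PosGe (Suc m) (2 * T + 1)))"
proof -
  have "PosGe (Suc m) T - Bad (Suc m) T \<subseteq> Good (Suc m) T"
    by (auto simp: PosGe_def Bad_def Good_def not_le)
  then have "card (PosGe (Suc m) T - Bad (Suc m) T) \<le> card (Good (Suc m) T)"
    by (intro card_mono Good_finite)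
  moreover have "card (PosGe (Suc m) T) - card (Bad (Suc m) T) \<le> card (PosGe (Suc m) T - Bad (Suc m) T)"
    by (rule diff_card_le_card_Diff) (rule finite_subset[OF _ pos_finite[of "Suc m"]], auto simp: Bad_def)
  ultimately show ?thesis using card_Bad[OF T, of m] by linarith
qed



lemma choose_ratio: "(m choose Suc u) * Suc u = (m choose u) * (m - u)"
  by (metis binomial_absorb_comp binomial_absorption mult.commute)

lemma cd_rel: "(Suc k) * ((2*k+1) choose k) = (2*k+1) * ((2*k) choose k)"
  "((2*k+2) choose (k+1)) = 2 * ((2*k+1) choose k)"
proof -
  have "Suc k * (Suc (2*k) choose Suc k) = Suc (2*k) * ((2*k) choose k)"
    by (rule Suc_times_binomial)
  moreover have "(Suc (2*k) choose Suc k) = (Suc (2*k) choose k)"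
    by (subst binomial_symmetric) auto
  ultimately show "(Suc k) * ((2*k+1) choose k) = (2*k+1) * ((2*k) choose k)" by simp
  have "Suc k * (Suc (Suc (2*k)) choose Suc k) = Suc (Suc (2*k)) * (Suc (2*k) choose k)"
    by (rule Suc_times_binomial)
  then have "Suc k * (Suc (Suc (2*k)) choose Suc k) = Suc k * (2 * (Suc (2*k) choose k))" by simp
  then have "(Suc (Suc (2*k)) choose Suc k) = 2 * (Suc (2*k) choose k)"
    by (simp only: mult_cancel1) simp
  moreover have "2*k+2 = Suc (Suc (2*k))" "k + 1 = Suc k" "2*k+1 = Suc (2*k)" by simp_all
  ultimately show "((2*k+2) choose (k+1)) = 2 * ((2*k+1) choose k)" by (simp only:)
qed



lemma central_upper_even: "real ((2*k) choose k) ^ 2 * (3 * k + 1) \<le> 16 ^ k"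
proof (induction k)
  case 0 then show ?case by simp
next
  case (Suc k)
  define c where "c = real ((2*k) choose k)"
  define d where "d = real ((2*k+1) choose k)"
  define K where "K = real k"
  have rel: "(K + 1) * d = (2*K+1) * c"
  proof -
    have "real (Suc k * ((2*k+1) choose k)) = real ((2*k+1) * ((2*k) choose k))"
      using cd_rel(1)[of k] by (simp only:)
    then show ?thesis unfolding c_def d_def K_def by (simp add: algebra_simps)
  qed
  have c': "real ((2 * Suc k) choose Suc k) = 2 * d" unfolding d_def using cd_rel(2)[of k]
    by (simp add: algebra_simps)
  have IH: "c^2 * (3*K+1) \<le> 16^k" using Suc.IH unfolding c_def K_def by (simp add: algebra_simps)
  have K0: "K \<ge> 0" unfolding K_def by simp
  have key: "4 * d^2 * (3*K+4) * (K+1)^2 \<le> 16 * c^2 * (3*K+1) * (K+1)^2"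
  proof -
    have "4 * d^2 * (3*K+4) * (K+1)^2 = 4 * ((K+1)*d)^2 * (3*K+4)" by (simp add: algebra_simps power2_eq_square)
    also have "\<dots> = 4 * ((2*K+1)*c)^2 * (3*K+4)" using rel by simp
    also have "\<dots> = 16 * c^2 * (3*K+1) * (K+1)^2 - 4 * K * c^2" by (simp add: algebra_simps power2_eq_square)
    also have "\<dots> \<le> 16 * c^2 * (3*K+1) * (K+1)^2" using K0 by simp
    finally show ?thesis .
  qed
  have "4 * d^2 * (3*K+4) \<le> 16 * c^2 * (3*K+1)"
  proof -
    have "(K+1)^2 > 0" using K0 by simp
    then show ?thesis using key by (simp add: mult_le_cancel_right)
  qed
  also have "\<dots> \<le> 16 * 16^k" using IH by simp
  finally have "(2*d)^2 * (3*K+4) \<le> 16^(Suc k)" by (simp add: power2_eq_square algebra_simps)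
  then show ?case using c' unfolding K_def by (simp add: algebra_simps)
qed



lemma central_lower_odd: "16 ^ k \<le> (real k + 1) * real ((2*k+1) choose k) ^ 2"
proof (induction k)
  case 0 then show ?case by simp
next
  case (Suc k)
  define d where "d = real ((2*k+1) choose k)"
  define d' where "d' = real ((2*Suc k+1) choose Suc k)"
  define K where "K = real k"
  have K0: "K \<ge> 0" unfolding K_def by simp
  have rel: "(K + 2) * d' = (2*K+3) * (2 * d)"
  proof -
    obtain P where P: "P = ((2*Suc k+1) choose Suc k)" by simp
    obtain Q where Q: "Q = ((2*Suc k) choose Suc k)" by simp
    obtain D0 where D0: "D0 = ((2*k+1) choose k)" by simp
    have e1: "Suc (Suc k) * P = (2*Suc k+1) * Q" using cd_rel(1)[of "Suc k"] P Q by simp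
    have e2: "Q = 2 * D0" using cd_rel(2)[of k] Q D0 by simp
    have "real (Suc (Suc k) * P) = real ((2*Suc k+1) * (2 * D0))" using e1 e2 by simp
    then have "(real k + 2) * real P = (2 * real k + 3) * (2 * real D0)"
      unfolding of_nat_mult by (simp add: algebra_simps)
    then show ?thesis unfolding d'_def K_def d_def P D0 .
  qed
  have IH: "16^k \<le> (K+1) * d^2" using Suc.IH unfolding d_def K_def by simp
  have "(K+2) * (16 * 16^k) \<le> (K+2) * ((K+2) * d'^2)"
  proof -
    have "(K+2) * (16 * 16^k) \<le> (K+2) * (16 * ((K+1) * d^2))"
      using IH K0 by (intro mult_left_mono) auto
    also have "\<dots> \<le> 4 * (2*K+3)^2 * d^2"
    proof -
      have "4 * (2*K+3)^2 * d^2 - (K+2) * (16 * ((K+1) * d^2)) = 4 * d^2"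
        by (simp add: algebra_simps power2_eq_square)
      then show ?thesis by (smt (verit) zero_le_power2)
    qed
    also have "\<dots> = ((K+2) * d')^2" using rel by (simp add: power2_eq_square algebra_simps)
    also have "\<dots> = (K+2) * ((K+2) * d'^2)" by (simp add: power2_eq_square)
    finally show ?thesis .
  qed
  then have "16 * 16^k \<le> (K+2) * d'^2" using K0 by (simp add: mult_le_cancel_left)
  then show ?case unfolding d'_def K_def by (simp add: algebra_simps)
qed

lemma central_upper: "real (m choose (m div 2)) ^ 2 * (real m + 1) \<le> 4 ^ m"
proof (cases "even m")
  case True
  then obtain k where m: "m = 2*k" by auto
  have md: "m div 2 = k" unfolding m by simp
  have "real (m choose (m div 2)) ^ 2 * (real m + 1) \<le> real ((2*k) choose k) ^ 2 * (3 * k + 1)"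
    unfolding md unfolding m by (intro mult_left_mono) auto
  also have "\<dots> \<le> 16 ^ k" using central_upper_even[of k] by simp
  also have "\<dots> = 4 ^ m" unfolding m by (simp add: power_mult)
  finally show ?thesis .
next
  case False
  then obtain k where m: "m = 2*k+1" using oddE by blast
  have md: "m div 2 = k" unfolding m by simp
  have c: "real ((2*Suc k) choose Suc k) = 2 * real ((2*k+1) choose k)"
    using cd_rel(2)[of k] by (simp add: algebra_simps)
  have "real (m choose (m div 2)) ^ 2 * (real m + 1) \<le> real ((2*k+1) choose k) ^ 2 * (3 * k + 4)"
    unfolding md unfolding m by (intro mult_left_mono) auto
  also have "\<dots> = real ((2*Suc k) choose Suc k) ^ 2 * (3 * Suc k + 1) / 4"
    unfolding c by (simp add: algebra_simps power2_eq_square)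
  also have "\<dots> \<le> 16 ^ Suc k / 4" using central_upper_even[of "Suc k"] by (intro divide_right_mono) auto
  also have "\<dots> = 4 ^ m" unfolding m by (simp add: power_mult power_add)
  finally show ?thesis .
qed

lemma central_lower: "4 ^ m \<le> 2 * (real m + 1) * real (m choose (m div 2)) ^ 2"
proof (cases "even m")
  case True
  then obtain k where m: "m = 2*k" by auto
  show ?thesis
  proof (cases k)
    case 0 then show ?thesis using m by simp
  next
    case (Suc j)
    have c: "real (m choose (m div 2)) = 2 * real ((2*j+1) choose j)"
      unfolding m Suc using cd_rel(2)[of j] by (simp add: algebra_simps)
    have "(4::real) ^ m = 16 * 16 ^ j" unfolding m Suc by (simp add: power_mult)
    also have "\<dots> \<le> 16 * ((real j + 1) * real ((2*j+1) choose j) ^ 2)"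
      using central_lower_odd[of j] by simp
    also have "\<dots> \<le> 2 * (real m + 1) * real (m choose (m div 2)) ^ 2"
    proof -
      define d where "d = real ((2*j+1) choose j)"
      have rm: "real m = 2 * real j + 2" unfolding m Suc by simp
      have "2 * (real m + 1) * (2*d)^2 - 16 * ((real j + 1) * d^2) = 8 * d^2"
        unfolding rm by (simp add: algebra_simps power2_eq_square)
      then have "16 * ((real j + 1) * d^2) \<le> 2 * (real m + 1) * (2*d)^2"
        by (smt (verit) zero_le_power2)
      then show ?thesis unfolding c d_def .
    qed
    finally show ?thesis .
  qed
next
  case False
  then obtain k where m: "m = 2*k+1" using oddE by blast
  have md: "m div 2 = k" unfolding m by simp
  have "(4::real) ^ m = 4 * 16 ^ k" unfolding m by (simp add: power_mult)
  also have "\<dots> \<le> 4 * ((real k + 1) * real ((2*k+1) choose k) ^ 2)"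
    using central_lower_odd[of k] by simp
  also have "\<dots> = 2 * (real m + 1) * real (m choose (m div 2)) ^ 2"
    unfolding md unfolding m by (simp add: algebra_simps)
  finally show ?thesis .
qed



lemma step_diff: assumes "1 \<le> u" "u \<le> m"
  shows "real (m choose u) - real (m choose (u - 1)) =
    real (m choose u) * (real m - 2 * real u + 1) / (real m - real u + 1)"
proof -
  have "(m choose Suc (u - 1)) * Suc (u - 1) = (m choose (u - 1)) * (m - (u - 1))"
    by (rule choose_ratio)
  then have e: "(m choose u) * u = (m choose (u - 1)) * (m - (u - 1))" using assms by simp
  have "real (m choose u) * real u = real (m choose (u - 1)) * (real m - real u + 1)"
  proof -
    have "real ((m choose u) * u) = real ((m choose (u - 1)) * (m - (u - 1)))" using e by simp
    then show ?thesis using assms by (simp add: of_nat_diff)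
  qed
  moreover have pos: "real m - real u + 1 > 0" using assms by simp
  ultimately have "real (m choose (u - 1)) = real (m choose u) * real u / (real m - real u + 1)"
    by (simp add: field_simps)
  then show ?thesis using pos by (simp add: field_simps)
qed

lemma near_central:
  assumes T: "1 \<le> T" and m1: "16 * T^2 \<le> m" and t1: "m + 1 \<le> 2 * t + 2 * T" and t2: "2 * t \<le> m"
  shows "real (m choose t) \<ge> 3 / 4 * real (m choose (m div 2))"
proof -
  let ?f = "\<lambda>u. real (m choose u)"
  let ?c = "m div 2"
  let ?M = "?f ?c"
  have tc: "t \<le> ?c" using t2 by simp
  have cdiv: "2 * ?c \<le> m" by simp
  have "1 \<le> T^2" using T by (metis one_le_power)
  then have mpos: "real m > 0" using m1 by simp
  have sum: "?M - ?f t = (\<Sum>u\<in>{t..<?c}. ?f (Suc u) - ?f u)"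
    using sum_Suc_diff'[OF tc, of ?f] by simp
  have trm: "?f (Suc u) - ?f u \<le> ?M * (4 * real T / real m)" if u: "u \<in> {t..<?c}" for u
  proof -
    have u1: "t \<le> u" "u < ?c" using u by auto
    have n1: "2 * Suc u \<le> m" using u1 by presburger
    have sd: "?f (Suc u) - ?f u = ?f (Suc u) * (real m - 2 * real (Suc u) + 1) / (real m - real (Suc u) + 1)"
      using step_diff[of "Suc u" m] u1 by simp
    have n1r: "2 * real u + 2 \<le> real m"
    proof -
      have "real (2 * Suc u) \<le> real m" using n1 by (simp only: of_nat_le_iff)
      then show ?thesis by simp
    qed
    have b0: "0 \<le> real m - 2 * real (Suc u) + 1" using n1r unfolding of_nat_Suc by argo
    have t1': "real m + 1 \<le> 2 * real t + 2 * real T"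
    proof -
      have "real (m+1) \<le> real (2*t + 2*T)" using t1 by (simp only: of_nat_le_iff)
      then show ?thesis by simp
    qed
    have tu: "real t \<le> real u" using u1(1) by simp
    have b1: "real m - 2 * real (Suc u) + 1 \<le> 2 * real T" using t1' tu unfolding of_nat_Suc by argo
    have c1: "real m - real (Suc u) + 1 \<ge> real m / 2" using n1r unfolding of_nat_Suc by argo
    have c0: "real m - real (Suc u) + 1 > 0" using c1 mpos by linarith
    have q: "(real m - 2 * real (Suc u) + 1) / (real m - real (Suc u) + 1) \<le> 4 * real T / real m"
    proof -
      have "4 * real T / real m * (real m - real (Suc u) + 1) \<ge> 4 * real T / real m * (real m / 2)"
        using c1 by (intro mult_left_mono) auto
      also have "4 * real T / real m * (real m / 2) = 2 * real T" using mpos by simp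
      finally show ?thesis using b1 c0 by (simp add: divide_le_eq)
    qed
    have "?f (Suc u) * ((real m - 2 * real (Suc u) + 1) / (real m - real (Suc u) + 1)) \<le> ?M * (4 * real T / real m)"
      by (rule mult_mono) (use q b0 c0 binomial_maximum[of m "Suc u"] in auto)
    then show ?thesis using sd by simp
  qed
  have "?M - ?f t \<le> real (card {t..<?c}) * (?M * (4 * real T / real m))"
    unfolding sum by (rule sum_bounded_above) (rule trm)
  also have "real (card {t..<?c}) \<le> real T" using t1 t2 cdiv by simp
  then have "real (card {t..<?c}) * (?M * (4 * real T / real m)) \<le> real T * (?M * (4 * real T / real m))"
    by (intro mult_right_mono) auto
  also have "real T * (?M * (4 * real T / real m)) = ?M * (16 * real T ^ 2) / (4 * real m)"
    by (simp add: power2_eq_square)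
  also have "\<dots> \<le> ?M * real m / (4 * real m)"
  proof -
    have "16 * real T ^ 2 \<le> real m" using m1 by (metis of_nat_le_iff of_nat_mult of_nat_numeral of_nat_power)
    then show ?thesis using mpos by (intro divide_right_mono mult_left_mono) auto
  qed
  also have "\<dots> = ?M / 4" using mpos by simp
  finally show ?thesis by simp
qed



lemma binom_diff:
  assumes T: "1 \<le> T" and m1: "16 * T^2 \<le> m" and m2: "m \<le> 64 * T^2"
    and a1: "2 * i1 + T \<le> m + 1" and a2: "m \<le> 2 * i1 + T"
    and b1: "2 * i2 + 2 * T \<le> m" and b2: "m \<le> 2 * i2 + 2 * T + 1"
  shows "real (m choose i1) - real (m choose i2) \<ge> real (m choose (m div 2)) / 400"
proof -
  let ?f = "\<lambda>u. real (m choose u)"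
  let ?M = "?f (m div 2)"
  have "1 \<le> T^2" using T by (metis one_le_power)
  then have m16: "16 \<le> m" using m1 by simp
  then have mpos: "real m > 0" by simp
  have M0: "?M \<ge> 0" by simp
  have i12: "i2 \<le> i1" using a2 b1 by linarith
  have sum: "?f i1 - ?f i2 = (\<Sum>u\<in>{i2..<i1}. ?f (Suc u) - ?f u)"
    using sum_Suc_diff'[OF i12, of ?f] by simp
  let ?K = "(3/4 * ?M) * (real T / (real m + 1))"
  have trm: "?f (Suc u) - ?f u \<ge> ?K" if u: "u \<in> {i2..<i1}" for u
  proof -
    have u1: "i2 \<le> u" "u < i1" using u by auto
    have v1: "m + 1 \<le> 2 * Suc u + 2 * T" using u1 b2 by presburger
    have v2: "2 * Suc u \<le> m" using u1 a1 T by presburger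
    have sd: "?f (Suc u) - ?f u = ?f (Suc u) * (real m - 2 * real (Suc u) + 1) / (real m - real (Suc u) + 1)"
      using step_diff[of "Suc u" m] v2 by simp
    have fv: "?f (Suc u) \<ge> 3/4 * ?M" by (rule near_central[OF T m1 v1 v2])
    have br: "real (2 * Suc u + T) \<le> real (m + 1)" using u1 a1 by (simp only: of_nat_le_iff) presburger
    then have bT: "real m - 2 * real (Suc u) + 1 \<ge> real T" by simp
    have cr: "real (2 * Suc u) \<le> real m" using v2 by (simp only: of_nat_le_iff)
    then have c0: "real m - real (Suc u) + 1 > 0" by simp
    have c1: "real m - real (Suc u) + 1 \<le> real m + 1" by simp
    have q: "real T / (real m + 1) \<le> (real m - 2 * real (Suc u) + 1) / (real m - real (Suc u) + 1)"
    proof -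
      have "real T / (real m + 1) \<le> real T / (real m - real (Suc u) + 1)"
        using c0 c1 by (intro divide_left_mono) auto
      also have "\<dots> \<le> (real m - 2 * real (Suc u) + 1) / (real m - real (Suc u) + 1)"
        using bT c0 by (intro divide_right_mono) auto
      finally show ?thesis .
    qed
    have "?K \<le> ?f (Suc u) * ((real m - 2 * real (Suc u) + 1) / (real m - real (Suc u) + 1))"
      using fv q M0 by (intro mult_mono) auto
    then show ?thesis using sd by simp
  qed
  have "real (card {i2..<i1}) * ?K \<le> ?f i1 - ?f i2"
    unfolding sum by (rule sum_bounded_below) (rule trm)
  moreover have "real T / 2 * ?K \<le> real (card {i2..<i1}) * ?K"
  proof (rule mult_right_mono)
    have "T \<le> 2 * (i1 - i2)" using a2 b1 i12 by presburger
    then have "real (2 * (i1 - i2)) \<ge> real T" by (simp only: of_nat_le_iff)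
    then show "real T / 2 \<le> real (card {i2..<i1})" by simp
    show "0 \<le> ?K" using M0 by simp
  qed
  moreover have "?M / 400 \<le> real T / 2 * ?K"
  proof -
    have tm: "real m \<le> 64 * real T ^ 2" using m2 by (metis of_nat_le_iff of_nat_mult of_nat_numeral of_nat_power)
    have eq: "real T / 2 * ?K = ?M * (3 * real T ^ 2) / (8 * (real m + 1))"
      by (simp add: power2_eq_square field_simps)
    have le: "?M / 400 \<le> ?M * (3 * real T ^ 2) / (8 * (real m + 1))"
    proof -
      have "8 * (real m + 1) \<le> 400 * (3 * real T ^ 2)" using tm mpos m16 by simp
      then have "?M * (8 * (real m + 1)) \<le> ?M * (400 * (3 * real T ^ 2))" using M0 by (rule mult_left_mono)
      then show ?thesis using mpos by (simp add: field_simps)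
    qed
    show ?thesis unfolding eq by (rule le)
  qed
  ultimately show ?thesis by linarith
qed



lemma exT: "16 \<le> m \<Longrightarrow> \<exists>T::nat. 1 \<le> T \<and> 16 * T^2 \<le> m \<and> m < 16 * (T+1)^2"
proof (induction m rule: dec_induct)
  case base
  show ?case by (rule exI[of _ 1]) (simp add: power2_eq_square)
next
  case (step m)
  then obtain T where T: "1 \<le> T" "16 * T^2 \<le> m" "m < 16 * (T+1)^2" by auto
  show ?case
  proof (cases "Suc m < 16 * (T+1)^2")
    case True then show ?thesis using T by (intro exI[of _ T]) auto
  next
    case False
    then have "Suc m = 16 * (T+1)^2" using T by linarith
    moreover have "(T+1)^2 < (T+2)^2" by (simp add: power_strict_mono)
    ultimately show ?thesis by (intro exI[of _ "T+1"]) auto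
  qed
qed

lemma four_pow: "(4::real) ^ n = (2 ^ n)^2"
proof -
  have "(4::real) ^ n = (2^2)^n" by simp
  also have "\<dots> = 2 ^ (2 * n)" by (rule power_mult[symmetric])
  also have "\<dots> = (2 ^ n)^2" by (simp add: power_mult mult.commute)
  finally show ?thesis .
qed

lemma upper: assumes n: "2 \<le> n" shows "real (B n) \<le> 2 ^ n / real n"
proof -
  define a where "a = n div 2"
  define b where "b = n - a"
  have ab: "a + b = n" unfolding a_def b_def by simp
  obtain ma where ma: "a = Suc ma" using n unfolding a_def by (cases "n div 2") auto
  obtain mb where mb: "b = Suc mb" using n unfolding a_def b_def by (cases "n - n div 2") auto
  define X where "X = real (ma choose (ma div 2))"
  define Y where "Y = real (mb choose (mb div 2))"
  have Bl: "real (B n) \<le> X * Y"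
  proof -
    have "B n \<le> card (pos a) * card (pos b)" by (rule B_upper_split[OF ab])
    then show ?thesis unfolding X_def Y_def ma mb card_pos
      by (metis of_nat_le_iff of_nat_mult)
  qed
  have X0: "X \<ge> 0" "Y \<ge> 0" unfolding X_def Y_def by auto
  have Xb: "X^2 * real a \<le> 4 ^ ma" using central_upper[of ma] unfolding X_def ma by (simp add: add.commute)
  have Yb: "Y^2 * real b \<le> 4 ^ mb" using central_upper[of mb] unfolding Y_def mb by (simp add: add.commute)
  have P: "(X*Y)^2 * (real a * real b) \<le> 4 ^ ma * 4 ^ mb"
  proof -
    have "(X*Y)^2 * (real a * real b) = (X^2 * real a) * (Y^2 * real b)" by (simp add: power2_eq_square algebra_simps)
    also have "\<dots> \<le> 4 ^ ma * 4 ^ mb" using Xb Yb by (intro mult_mono) auto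
    finally show ?thesis .
  qed
  have e4: "(4::real) ^ ma * 4 ^ mb * 16 = 4 ^ n"
  proof -
    have "n = ma + mb + 2" using ab ma mb by simp
    then show ?thesis by (simp add: power_add)
  qed
  have nab: "real n ^ 2 \<le> 16 * (real a * real b)"
  proof -
    have h1: "2 * real a \<ge> real n - 1" unfolding a_def by linarith
    have h2: "2 * real b \<ge> real n" unfolding b_def a_def by linarith
    have h3: "real n - 1 \<ge> 0" using n by simp
    have "(real n - 1) * real n \<le> (2 * real a) * (2 * real b)" using h1 h2 h3 by (intro mult_mono) auto
    moreover have "real n ^ 2 \<le> 4 * ((real n - 1) * real n)"
    proof -
      have "4 * ((real n - 1) * real n) - real n ^ 2 = real n * (3 * real n - 4)" by (simp add: algebra_simps power2_eq_square)
      moreover have "real n * (3 * real n - 4) \<ge> 0" using n by simp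
      ultimately show ?thesis by linarith
    qed
    ultimately show ?thesis by linarith
  qed
  have "(real (B n) * real n)^2 \<le> (2 ^ n)^2"
  proof -
    have "(real (B n) * real n)^2 = real (B n)^2 * real n^2" by (simp add: power_mult_distrib)
    also have "\<dots> \<le> (X*Y)^2 * (16 * (real a * real b))"
      using Bl nab by (intro mult_mono power_mono) auto
    also have "\<dots> = 16 * ((X*Y)^2 * (real a * real b))" by simp
    also have "\<dots> \<le> 16 * (4 ^ ma * 4 ^ mb)" using P by simp
    also have "\<dots> = (2 ^ n)^2" using e4 four_pow[of n] by simp
    finally show ?thesis .
  qed
  then have "real (B n) * real n \<le> 2 ^ n" by (rule power2_le_imp_le) simp
  then show ?thesis using n by (simp add: field_simps)
qed



lemma lower: assumes n: "40 \<le> n" shows "2 ^ n \<le> 1280000 * real n * real (B n)"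
proof -
  define a where "a = n div 2"
  define m where "m = a - 1"
  have am: "a = Suc m" unfolding m_def a_def using n by simp
  have m16: "16 \<le> m" unfolding m_def a_def using n by simp
  obtain T where T: "1 \<le> T" "16 * T^2 \<le> m" "m < 16 * (T+1)^2" using exT[OF m16] by auto
  have m64: "m \<le> 64 * T^2"
  proof -
    have "(T+1)^2 \<le> (2*T)^2" using T(1) by (intro power_mono) auto
    then show ?thesis using T(3) by (simp add: power_mult_distrib)
  qed
  have TT: "T \<le> T^2" using T(1) by (simp add: power2_eq_square)
  have T2: "2 * T \<le> m" using T(2) TT by linarith
  define i1 where "i1 = (m + 1 - T) div 2"
  define i2 where "i2 = (m - 2 * T) div 2"
  have a1: "2 * i1 + T \<le> m + 1" "m \<le> 2 * i1 + T" unfolding i1_def using T2 by presburger+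
  have b1: "2 * i2 + 2 * T \<le> m" "m \<le> 2 * i2 + 2 * T + 1" unfolding i2_def using T2 by presburger+
  define M where "M = real (m choose (m div 2))"
  have diff: "real (m choose i1) - real (m choose i2) \<ge> M / 400"
    unfolding M_def by (rule binom_diff[OF T(1) T(2) m64 a1 b1])
  have c1: "card (PosGe (Suc m) (int T)) = m choose i1"
  proof -
    have e: "int m + 1 - int T = int (m + 1 - T)" using T2 by simp
    have "nat ((int m + 1 - int T) div 2) = nat (int (m + 1 - T) div 2)" by (simp only: e)
    also have "\<dots> = nat (int ((m + 1 - T) div 2))" by (simp only: zdiv_int of_nat_numeral)
    also have "\<dots> = i1" unfolding i1_def by (rule nat_int)
    finally have "nat ((int m + 1 - int T) div 2) = i1" .
    then show ?thesis using card_PosGe[of "int T" m] T T2 by simp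
  qed
  have c2: "card (PosGe (Suc m) (2 * int T + 1)) = m choose i2"
  proof -
    have e: "int m + 1 - (2 * int T + 1) = int (m - 2 * T)" using T2 by simp
    have "nat ((int m + 1 - (2 * int T + 1)) div 2) = nat (int (m - 2 * T) div 2)" by (simp only: e)
    also have "\<dots> = nat (int ((m - 2 * T) div 2))" by (simp only: zdiv_int of_nat_numeral)
    also have "\<dots> = i2" unfolding i2_def by (rule nat_int)
    finally have "nat ((int m + 1 - (2 * int T + 1)) div 2) = i2" .
    then show ?thesis using card_PosGe[of "2 * int T + 1" m] T T2 by simp
  qed
  define G where "G = real (card (Good (Suc m) (int T)))"
  have G: "G \<ge> M / 400"
  proof -
    have "int (card (Good (Suc m) (int T))) \<ge> int (m choose i1) - int (m choose i2)"
      using card_Good[of "int T" m] T c1 c2 by simp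
    then have "G \<ge> real (m choose i1) - real (m choose i2)" unfolding G_def
      by (metis of_int_le_iff of_int_diff of_int_of_nat_eq)
    then show ?thesis using diff by linarith
  qed
  have M0: "M \<ge> 0" unfolding M_def by simp
  have GB: "G * G \<le> real (B n)"
  proof -
    have "card (Good a (int T)) * card (Good a (int T)) \<le> B (a + a)" by (rule Good_sq)
    also have "B (a + a) \<le> B n" using B_mono' a_def by simp
    finally show ?thesis unfolding G_def am by (metis of_nat_le_iff of_nat_mult)
  qed
  have MB: "M^2 \<le> 160000 * real (B n)"
  proof -
    have "M \<le> 400 * G" using G by simp
    then have "M^2 \<le> (400 * G)^2" using M0 by (intro power_mono) auto
    then show ?thesis using GB by (simp add: power2_eq_square)
  qed
  have cl: "4 ^ m \<le> 2 * real a * M^2" using central_lower[of m] unfolding M_def am by (simp add: add.commute)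
  have p: "(2::real) ^ n \<le> 8 * 4 ^ m"
  proof -
    have "n \<le> 2 * m + 3" unfolding m_def a_def using n by simp
    then have "(2::real) ^ n \<le> 2 ^ (2 * m + 3)" by (intro power_increasing) auto
    also have "\<dots> = 8 * 4 ^ m" by (simp add: power_add power_mult)
    finally show ?thesis .
  qed
  have an: "2 * real a \<le> real n" unfolding a_def by linarith
  have "(2::real) ^ n \<le> 8 * (2 * real a * M^2)" using p cl by linarith
  also have "\<dots> = 8 * (2 * real a) * M^2" by simp
  also have "\<dots> \<le> 8 * real n * (160000 * real (B n))"
    using an MB M0 by (intro mult_mono) auto
  also have "\<dots> = 1280000 * real n * real (B n)" by simp
  finally show ?thesis .
qed

theorem proposition4:
  shows "\<exists>c C :: real. c > 0 \<and> C > 0 \<and>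
    (\<exists>N. \<forall>n\<ge>N. c * (2 ^ n / real n) \<le> real (B n) \<and> real (B n) \<le> C * (2 ^ n / real n))"
proof (intro exI conjI)
  show "(1 / 1280000 :: real) > 0" by simp
  show "(1::real) > 0" by simp
  show "\<forall>n\<ge>40. 1 / 1280000 * (2 ^ n / real n) \<le> real (B n) \<and> real (B n) \<le> 1 * (2 ^ n / real n)"
  proof (intro allI impI conjI)
    fix n :: nat assume n: "40 \<le> n"
    then have np: "real n > 0" by simp
    show "1 / 1280000 * (2 ^ n / real n) \<le> real (B n)"
      using lower[OF n] np by (simp add: field_simps)
    show "real (B n) \<le> 1 * (2 ^ n / real n)" using upper[of n] n by simp
  qed
qed

end
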